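(* There exists a function $f:\mathbb{N}^3\to\mathbb{N}$ such that the following holds for all integers $D,k\ge 1$ and $b\ge 0$. Let $T$ be a rooted tree of maximum degree at most $D$ satisfying $b(T)\le b$. If every root-leaf path in $T$ contains less than $k$ vertices with at least two children, then $T$ has at most $f(D,b,k)$ leaves.
   Context: For a rooted tree $T$, $b(T)$ denotes the maximum depth of a rooted complete binary tree which appears in $T$ as a rooted minor, where the depth of a rooted tree is the maximum number of edges of a root-leaf path. *)

theory Defs
  imports Main
begin

text \<open>A finite rooted tree is given by a finite vertex set V, a root r in V and a
parent function p (p v is the parent of v for v in V other than r; p r is irrelevant).
Acyclicity/connectivity: iterating p from any vertex reaches the root.\<close>

definition rooted_tree :: "'a set \<Rightarrow> 'a \<Rightarrow> ('a \<Rightarrow> 'a) \<Rightarrow> bool" where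
  "rooted_tree V r p \<longleftrightarrow> finite V \<and> r \<in> V \<and> (\<forall>v\<in>V - {r}. p v \<in> V)
     \<and> (\<forall>v\<in>V. \<exists>n. (p ^^ n) v = r)"

definition children :: "'a set \<Rightarrow> 'a \<Rightarrow> ('a \<Rightarrow> 'a) \<Rightarrow> 'a \<Rightarrow> 'a set" where
  "children V r p v = {u \<in> V. u \<noteq> r \<and> p u = v}"

definition tdegree :: "'a set \<Rightarrow> 'a \<Rightarrow> ('a \<Rightarrow> 'a) \<Rightarrow> 'a \<Rightarrow> nat" where
  "tdegree V r p v = card (children V r p v) + (if v = r then 0 else 1)"

definition leaves :: "'a set \<Rightarrow> 'a \<Rightarrow> ('a \<Rightarrow> 'a) \<Rightarrow> 'a set" where
  "leaves V r p = {v \<in> V. children V r p v = {}}"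

definition root_path :: "'a \<Rightarrow> ('a \<Rightarrow> 'a) \<Rightarrow> 'a \<Rightarrow> 'a set" where
  "root_path r p v = {(p ^^ i) v | i. i \<le> (LEAST n. (p ^^ n) v = r)}"

definition tadj :: "'a set \<Rightarrow> 'a \<Rightarrow> ('a \<Rightarrow> 'a) \<Rightarrow> 'a \<Rightarrow> 'a \<Rightarrow> bool" where
  "tadj V r p u v \<longleftrightarrow> u \<in> V \<and> v \<in> V \<and> ((u \<noteq> r \<and> p u = v) \<or> (v \<noteq> r \<and> p v = u))"

definition tconnected :: "'a set \<Rightarrow> 'a \<Rightarrow> ('a \<Rightarrow> 'a) \<Rightarrow> 'a set \<Rightarrow> bool" where
  "tconnected V r p S \<longleftrightarrow>
     (\<forall>u\<in>S. \<forall>v\<in>S. (u, v) \<in> {(x, y). x \<in> S \<and> y \<in> S \<and> tadj V r p x y}\<^sup>*)"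

text \<open>The complete binary tree of depth d: vertices are boolean lists of length at most d,
root is [], the children of x are True#x and False#x.\<close>
definition cbt_rooted_minor :: "nat \<Rightarrow> 'a set \<Rightarrow> 'a \<Rightarrow> ('a \<Rightarrow> 'a) \<Rightarrow> bool" where
  "cbt_rooted_minor d V r p \<longleftrightarrow>
    (\<exists>\<beta> :: bool list \<Rightarrow> 'a set.
       (\<forall>x. length x \<le> d \<longrightarrow> \<beta> x \<noteq> {} \<and> \<beta> x \<subseteq> V \<and> tconnected V r p (\<beta> x))
     \<and> (\<forall>x y. length x \<le> d \<longrightarrow> length y \<le> d \<longrightarrow> x \<noteq> y \<longrightarrow> \<beta> x \<inter> \<beta> y = {})
     \<and> r \<in> \<beta> []
     \<and> (\<forall>x c. length (c # x) \<le> d \<longrightarrow>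
           (\<exists>u\<in>\<beta> (c # x). \<exists>v\<in>\<beta> x. tadj V r p u v)))"

definition bT :: "'a set \<Rightarrow> 'a \<Rightarrow> ('a \<Rightarrow> 'a) \<Rightarrow> nat" where
  "bT V r p = (GREATEST d. cbt_rooted_minor d V r p)"

end

theory Submission
  imports Defs
begin

definition dep :: "'a \<Rightarrow> ('a \<Rightarrow> 'a) \<Rightarrow> 'a \<Rightarrow> nat" where
  "dep r p x = (LEAST n. (p ^^ n) x = r)"

lemma dep_reach:
  assumes "rooted_tree V r p" "x \<in> V"
  shows "(p ^^ dep r p x) x = r"
proof -
  from assms have "\<exists>n. (p ^^ n) x = r" unfolding rooted_tree_def by blast
  then show ?thesis unfolding dep_def by (rule LeastI_ex)
qed

lemma dep_not_r:
  assumes "i < dep r p x"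
  shows "(p ^^ i) x \<noteq> r"
  using assms unfolding dep_def using not_less_Least by blast

lemma dep_in_V:
  assumes "rooted_tree V r p" "x \<in> V"
  shows "i \<le> dep r p x \<Longrightarrow> (p ^^ i) x \<in> V"
proof (induction i)
  case 0
  then show ?case using assms by simp
next
  case (Suc i)
  then have "(p ^^ i) x \<in> V" by simp
  moreover have "(p ^^ i) x \<noteq> r" using dep_not_r Suc.prems by (metis Suc_le_eq)
  ultimately show ?case using assms(1) unfolding rooted_tree_def by simp
qed

lemma dep_iter:
  assumes "rooted_tree V r p" "x \<in> V" "i \<le> dep r p x"
  shows "dep r p ((p ^^ i) x) = dep r p x - i"
  unfolding dep_def[of r p "(p ^^ i) x"]
proof (rule Least_equality)
  have "(p ^^ (dep r p x - i)) ((p ^^ i) x) = (p ^^ (dep r p x - i + i)) x"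
    by (simp add: funpow_add)
  also have "\<dots> = r" using assms dep_reach by simp
  finally show "(p ^^ (dep r p x - i)) ((p ^^ i) x) = r" .
next
  fix y assume "(p ^^ y) ((p ^^ i) x) = r"
  then have "(p ^^ (y + i)) x = r" by (simp add: funpow_add)
  then have "\<not> (y + i < dep r p x)" using dep_not_r by metis
  then show "dep r p x - i \<le> y" by simp
qed

lemma dep_r: "dep r p r = 0"
  unfolding dep_def by simp

definition dn :: "'a \<Rightarrow> ('a \<Rightarrow> 'a) \<Rightarrow> 'a \<Rightarrow> nat \<Rightarrow> 'a" where
  "dn r p l i = (p ^^ (dep r p l - i)) l"

definition idx :: "nat set \<Rightarrow> nat \<Rightarrow> (nat \<Rightarrow> nat) \<Rightarrow> nat \<Rightarrow> nat \<Rightarrow> nat" where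
  "idx V r p w c = card {c' \<in> children V r p w. c' < c}"

definition code :: "nat set \<Rightarrow> nat \<Rightarrow> (nat \<Rightarrow> nat) \<Rightarrow> nat \<Rightarrow> nat list" where
  "code V r p l = map (\<lambda>i. idx V r p (dn r p l i) (dn r p l (Suc i)))
     (filter (\<lambda>i. 2 \<le> card (children V r p (dn r p l i))) [0..<dep r p l])"

lemma dn_V:
  assumes "rooted_tree V r p" "l \<in> V" "i \<le> dep r p l"
  shows "dn r p l i \<in> V" "dep r p (dn r p l i) = i"
proof -
  have le: "dep r p l - i \<le> dep r p l" by simp
  show "dn r p l i \<in> V" unfolding dn_def using dep_in_V[OF assms(1,2) le] .
  show "dep r p (dn r p l i) = i" unfolding dn_def using dep_iter[OF assms(1,2) le] assms(3) by simp
qed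

lemma dn_0: assumes "rooted_tree V r p" "l \<in> V" shows "dn r p l 0 = r"
  using assms dep_reach unfolding dn_def by simp

lemma dn_top: "dn r p l (dep r p l) = l"
  unfolding dn_def by simp

lemma dn_down:
  assumes "j \<le> i" "i \<le> dep r p l"
  shows "dn r p l j = (p ^^ (i - j)) (dn r p l i)"
proof -
  have "dep r p l - j = (i - j) + (dep r p l - i)" using assms by simp
  then show ?thesis unfolding dn_def by (simp add: funpow_add)
qed

lemma dep_eq_r:
  assumes "rooted_tree V r p" "x \<in> V" "dep r p x = 0"
  shows "x = r"
  using dep_reach[OF assms(1,2)] assms(3) by simp

lemma dn_child:
  assumes "rooted_tree V r p" "l \<in> V" "i < dep r p l"
  shows "dn r p l (Suc i) \<in> children V r p (dn r p l i)"
proof -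
  have le: "Suc i \<le> dep r p l" using assms(3) by simp
  have inV: "dn r p l (Suc i) \<in> V" using dn_V(1)[OF assms(1,2) le] .
  have "dep r p (dn r p l (Suc i)) = Suc i" using dn_V(2)[OF assms(1,2) le] .
  then have nr: "dn r p l (Suc i) \<noteq> r" using dep_r by (metis nat.distinct(1))
  have "dn r p l i = (p ^^ (Suc i - i)) (dn r p l (Suc i))"
    using dn_down[of i "Suc i" r p l] assms by simp
  then have "p (dn r p l (Suc i)) = dn r p l i" by simp
  then show ?thesis using inV nr unfolding children_def by simp
qed

lemma idx_lt:
  assumes "finite V" "c \<in> children V r p w"
  shows "idx V r p w c < card (children V r p w)"
proof -
  have fin: "finite (children V r p w)" using assms(1) unfolding children_def by simp
  have "{c' \<in> children V r p w. c' < c} \<subset> children V r p w" using assms(2) by auto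
  then show ?thesis unfolding idx_def using fin psubset_card_mono by blast
qed

lemma idx_inj:
  assumes "finite V" "c \<in> children V r p w" "c' \<in> children V r p w"
    "idx V r p w c = idx V r p w c'"
  shows "c = c'"
proof (rule ccontr)
  assume ne: "c \<noteq> c'"
  have fin: "finite (children V r p w)" using assms(1) unfolding children_def by simp
  have *: "card {x \<in> children V r p w. x < a} < card {x \<in> children V r p w. x < b}"
    if "a < b" "a \<in> children V r p w" for a b
  proof -
    have "{x \<in> children V r p w. x < a} \<subset> {x \<in> children V r p w. x < b}"
      using that by auto
    then show ?thesis using fin by (intro psubset_card_mono) auto
  qed
  show False
  proof (cases "c < c'")
    case True
    then show ?thesis using *[of c c'] assms unfolding idx_def by simp
  next
    case False
    then have "c' < c" using ne by simp
    then show ?thesis using *[of c' c] assms unfolding idx_def by simp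
  qed
qed

lemma code_inj:
  assumes tree: "rooted_tree V r p" and l: "l \<in> leaves V r p" and l': "l' \<in> leaves V r p"
    and eq: "code V r p l = code V r p l'"
  shows "l = l'"
proof (rule ccontr)
  assume ne: "l \<noteq> l'"
  have lV: "l \<in> V" and l'V: "l' \<in> V" using l l' unfolding leaves_def by auto
  have finV: "finite V" using tree unfolding rooted_tree_def by simp
  define N where "N = dep r p l"
  define N' where "N' = dep r p l'"
  define P where "P = (\<lambda>j. j \<le> min N N' \<and> dn r p l j = dn r p l' j)"
  define j where "j = (GREATEST j. P j)"
  have P0: "P 0" unfolding P_def using dn_0[OF tree lV] dn_0[OF tree l'V] by simp
  have bnd: "\<And>y. P y \<Longrightarrow> y \<le> min N N'" unfolding P_def by simp
  have Pj: "P j" unfolding j_def using GreatestI_nat[of P 0 "min N N'", OF P0 bnd] .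
  have jmax: "\<And>y. P y \<Longrightarrow> y \<le> j" unfolding j_def using Greatest_le_nat bnd by blast
  have agree: "dn r p l i = dn r p l' i" if "i \<le> j" for i
  proof -
    have "dn r p l i = (p ^^ (j - i)) (dn r p l j)" using dn_down[of i j r p l] that Pj
      unfolding P_def N_def by simp
    also have "\<dots> = (p ^^ (j - i)) (dn r p l' j)" using Pj unfolding P_def by simp
    also have "\<dots> = dn r p l' i" using dn_down[of i j r p l'] that Pj
      unfolding P_def N'_def by simp
    finally show ?thesis .
  qed
  have jN: "j < N"
  proof (rule ccontr)
    assume "\<not> j < N"
    then have jN: "j = N" using Pj unfolding P_def by simp
    have "l = dn r p l N" unfolding N_def dn_top by simp
    show False
    proof (cases "N = N'")
      case True
      then have "l = l'" using Pj jN dn_top unfolding P_def N_def N'_def by metis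
      then show False using ne by simp
    next
      case False
      then have "N < N'" using Pj jN unfolding P_def by simp
      moreover have "dn r p l' (Suc N) \<in> children V r p (dn r p l' N)"
        using dn_child[OF tree l'V] \<open>N < N'\<close> unfolding N'_def by simp
      moreover have "dn r p l' N = l" using Pj jN \<open>l = dn r p l N\<close> unfolding P_def by simp
      ultimately show False using l unfolding leaves_def by auto
    qed
  qed
  have jN': "j < N'"
  proof (rule ccontr)
    assume "\<not> j < N'"
    then have jN: "j = N'" using Pj unfolding P_def by simp
    have "l' = dn r p l' N'" unfolding N'_def dn_top by simp
    show False
    proof (cases "N = N'")
      case True
      then have "l = l'" using Pj jN dn_top unfolding P_def N_def N'_def by metis
      then show False using ne by simp
    next
      case False
      then have "N' < N" using Pj jN unfolding P_def by simp
      moreover have "dn r p l (Suc N') \<in> children V r p (dn r p l N')"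
        using dn_child[OF tree lV] \<open>N' < N\<close> unfolding N_def by simp
      moreover have "dn r p l N' = l'" using Pj jN \<open>l' = dn r p l' N'\<close> unfolding P_def by simp
      ultimately show False using l' unfolding leaves_def by auto
    qed
  qed
  have diff: "dn r p l (Suc j) \<noteq> dn r p l' (Suc j)"
  proof
    assume "dn r p l (Suc j) = dn r p l' (Suc j)"
    then have "P (Suc j)" unfolding P_def using jN jN' by simp
    then show False using jmax by fastforce
  qed
  define w where "w = dn r p l j"
  have c1: "dn r p l (Suc j) \<in> children V r p w"
    unfolding w_def using dn_child[OF tree lV] jN unfolding N_def by simp
  have c2: "dn r p l' (Suc j) \<in> children V r p w"
    unfolding w_def agree[OF order_refl] using dn_child[OF tree l'V] jN' unfolding N'_def by simp
  have finC: "finite (children V r p w)" using finV unfolding children_def by simp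
  have "{dn r p l (Suc j), dn r p l' (Suc j)} \<subseteq> children V r p w" using c1 c2 by simp
  then have "card {dn r p l (Suc j), dn r p l' (Suc j)} \<le> card (children V r p w)"
    using finC card_mono by blast
  then have Q: "2 \<le> card (children V r p w)" using diff by simp
  define g where "g = (\<lambda>l i. idx V r p (dn r p l i) (dn r p l (Suc i)))"
  define Q where "Q = (\<lambda>l i. 2 \<le> card (children V r p (dn r p l i)))"
  have split: "[0..<M] = [0..<j] @ j # [Suc j..<M]" if "j < M" for M
  proof -
    have "[0..<M] = [0..<j] @ [j..<M]" using upt_add_eq_append[of 0 j "M - j"] that by simp
    then show ?thesis using upt_conv_Cons[OF that] by simp
  qed
  have codeeq: "code V r p x = map (g x) (filter (Q x) [0..<dep r p x])" for x
    unfolding code_def g_def Q_def by simp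
  have fe: "filter (Q l) [0..<j] = filter (Q l') [0..<j]"
    by (rule filter_cong) (auto simp: Q_def agree)
  have me: "map (g l) (filter (Q l) [0..<j]) = map (g l') (filter (Q l') [0..<j])"
    unfolding fe by (rule map_cong) (auto simp: g_def agree)
  have Ql: "Q l j" "Q l' j" unfolding Q_def using Q w_def agree[OF order_refl] by auto
  have "code V r p l = map (g l) (filter (Q l) [0..<j]) @ g l j # map (g l) (filter (Q l) [Suc j..<N])"
    unfolding codeeq N_def[symmetric] split[OF jN] using Ql by simp
  moreover have "code V r p l' = map (g l') (filter (Q l') [0..<j]) @ g l' j # map (g l') (filter (Q l') [Suc j..<N'])"
    unfolding codeeq N'_def[symmetric] split[OF jN'] using Ql by simp
  ultimately have "g l j = g l' j" using eq me by simp
  then have "idx V r p w (dn r p l (Suc j)) = idx V r p w (dn r p l' (Suc j))"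
    unfolding g_def w_def using agree[OF order_refl] by simp
  then show False using idx_inj[OF finV c1 c2] diff by simp
qed

lemma code_len:
  fixes V :: "nat set"
  assumes tree: "rooted_tree V r p" and lV: "l \<in> V"
  shows "length (code V r p l) \<le> card {w \<in> root_path r p l. card (children V r p w) \<ge> 2}"
proof -
  define N where "N = dep r p l"
  define Q where "Q = (\<lambda>i. 2 \<le> card (children V r p (dn r p l i)))"
  have "length (code V r p l) = length (filter Q [0..<N])"
    unfolding code_def Q_def N_def by simp
  also have "\<dots> = card {i. i < N \<and> Q i}"
  proof -
    have "{i. i < length [0..<N] \<and> Q ([0..<N] ! i)} = {i. i < N \<and> Q i}"
    proof (rule Collect_cong)
      fix i show "(i < length [0..<N] \<and> Q ([0..<N] ! i)) = (i < N \<and> Q i)"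
        by (cases "i < N") simp_all
    qed
    then show ?thesis using length_filter_conv_card[of Q "[0..<N]"] by (simp only:)
  qed
  also have "\<dots> \<le> card {w \<in> root_path r p l. card (children V r p w) \<ge> 2}"
  proof (rule card_inj_on_le[where f = "dn r p l"])
    show "inj_on (dn r p l) {i. i < N \<and> Q i}"
    proof (rule inj_onI)
      fix x y assume "x \<in> {i. i < N \<and> Q i}" "y \<in> {i. i < N \<and> Q i}" "dn r p l x = dn r p l y"
      then have "x \<le> dep r p l" "y \<le> dep r p l" unfolding N_def by auto
      then have "dep r p (dn r p l x) = x" "dep r p (dn r p l y) = y"
        using dn_V(2)[OF tree lV] by blast+
      then show "x = y" using \<open>dn r p l x = dn r p l y\<close> by metis
    qed
    have rp: "root_path r p l = (\<lambda>i. (p ^^ i) l) ` {..N}"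
      unfolding root_path_def dep_def[symmetric] N_def[symmetric] by blast
    show "finite {w \<in> root_path r p l. card (children V r p w) \<ge> 2}"
      unfolding rp by simp
    show "dn r p l ` {i. i < N \<and> Q i} \<subseteq> {w \<in> root_path r p l. card (children V r p w) \<ge> 2}"
    proof
      fix x assume "x \<in> dn r p l ` {i. i < N \<and> Q i}"
      then obtain i where i: "i < N" "Q i" and x: "x = dn r p l i" by blast
      have "x \<in> (\<lambda>i. (p ^^ i) l) ` {..N}" unfolding x dn_def N_def[symmetric] by simp
      moreover have "card (children V r p x) \<ge> 2" using i(2) x unfolding Q_def by simp
      ultimately show "x \<in> {w \<in> root_path r p l. card (children V r p w) \<ge> 2}"
        unfolding rp by blast
    qed
  qed
  finally show ?thesis .
qed

lemma code_set:
  fixes V :: "nat set"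
  assumes tree: "rooted_tree V r p" and lV: "l \<in> V"
    and deg: "\<forall>v\<in>V. card (children V r p v) \<le> D"
  shows "set (code V r p l) \<subseteq> {..<D}"
proof
  have finV: "finite V" using tree unfolding rooted_tree_def by simp
  fix x assume "x \<in> set (code V r p l)"
  then obtain i where i: "i < dep r p l" and x: "x = idx V r p (dn r p l i) (dn r p l (Suc i))"
    unfolding code_def by auto
  have c: "dn r p l (Suc i) \<in> children V r p (dn r p l i)" using dn_child[OF tree lV i] .
  have "dn r p l i \<in> V" using dn_V(1)[OF tree lV] i by simp
  then have "card (children V r p (dn r p l i)) \<le> D" using deg by simp
  then show "x \<in> {..<D}" using idx_lt[OF finV c] x by simp
qed

lemma main_bound:
  fixes V :: "nat set"
  assumes tree: "rooted_tree V r p"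
    and deg: "\<forall>v\<in>V. card (children V r p v) \<le> D"
    and br: "\<forall>l\<in>leaves V r p. card {w \<in> root_path r p l. card (children V r p w) \<ge> 2} < k"
  shows "card (leaves V r p) \<le> (\<Sum>n<k. D ^ n)"
proof -
  have lV: "leaves V r p \<subseteq> V" unfolding leaves_def by auto
  have inj: "inj_on (code V r p) (leaves V r p)"
  proof (rule inj_onI)
    fix a b assume "a \<in> leaves V r p" "b \<in> leaves V r p" "code V r p a = code V r p b"
    then show "a = b" by (rule code_inj[OF tree])
  qed
  have "card (leaves V r p) = card (code V r p ` leaves V r p)"
    by (rule card_image[OF inj, symmetric])
  also have "\<dots> \<le> card (\<Union>n\<in>{..<k}. {xs. set xs \<subseteq> {..<D} \<and> length xs = n})"
  proof (rule card_mono)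
    show "finite (\<Union>n\<in>{..<k}. {xs. set xs \<subseteq> {..<D} \<and> length xs = n})"
      by (intro finite_UN_I finite_lessThan finite_lists_length_eq)
    show "code V r p ` leaves V r p \<subseteq> (\<Union>n\<in>{..<k}. {xs. set xs \<subseteq> {..<D} \<and> length xs = n})"
    proof
      fix xs assume "xs \<in> code V r p ` leaves V r p"
      then obtain l where l: "l \<in> leaves V r p" and xs: "xs = code V r p l" by auto
      have "l \<in> V" using l lV by auto
      have "card {w \<in> root_path r p l. card (children V r p w) \<ge> 2} < k"
        using br l by blast
      then have "length xs < k" unfolding xs by (rule le_less_trans[OF code_len[OF tree \<open>l \<in> V\<close>]])
      moreover have "set xs \<subseteq> {..<D}" unfolding xs by (rule code_set[OF tree \<open>l \<in> V\<close> deg])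
      ultimately show "xs \<in> (\<Union>n\<in>{..<k}. {xs. set xs \<subseteq> {..<D} \<and> length xs = n})" by blast
    qed
  qed
  also have "\<dots> \<le> (\<Sum>n<k. card {xs. set xs \<subseteq> {..<D} \<and> length xs = n})"
    by (rule card_UN_le) simp
  also have "\<dots> = (\<Sum>n<k. D ^ n)"
    by (simp add: card_lists_length_eq)
  finally show ?thesis .
qed

theorem lemma15:
  shows "\<exists>f :: nat \<Rightarrow> nat \<Rightarrow> nat \<Rightarrow> nat. \<forall>D k b. D \<ge> 1 \<longrightarrow> k \<ge> 1 \<longrightarrow>
     (\<forall>(V :: nat set) r p.
        rooted_tree V r p
        \<and> (\<forall>v\<in>V. tdegree V r p v \<le> D)
        \<and> bT V r p \<le> b
        \<and> (\<forall>l\<in>leaves V r p. card {w \<in> root_path r p l. card (children V r p w) \<ge> 2} < k)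
        \<longrightarrow> card (leaves V r p) \<le> f D b k)"
proof (rule exI[where x = "\<lambda>D b k. \<Sum>n<k. D ^ n"], intro allI impI, elim conjE)
  fix D k b :: nat and V :: "nat set" and r p
  assume tree: "rooted_tree V r p" and deg: "\<forall>v\<in>V. tdegree V r p v \<le> D"
    and br: "\<forall>l\<in>leaves V r p. card {w \<in> root_path r p l. card (children V r p w) \<ge> 2} < k"
  have "\<forall>v\<in>V. card (children V r p v) \<le> D"
    using deg unfolding tdegree_def by fastforce
  then show "card (leaves V r p) \<le> (\<Sum>n<k. D ^ n)" using main_bound[OF tree _ br] by simp
qed

end
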